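(* Let $L \geq 2$, $m = L+1$, $\gamma = (L+1)^3$, and for $i \in \{0,\ldots,L\}$, $k\in[m]$ let $\pi_i(A_k) = w_i(k)/\sum_{h=1}^m w_i(h)$ with $w_i(k) = \gamma^{2(i+1)k - k^2+1} + \sum_{r=0}^L\gamma^{(2r+1)(i+1)-r^2-r}$. Let $\overline{\pi}(\xi) = \prod_{i=0}^L \pi_i(A_{\xi_i})$ for $\xi\in[m]^{L+1}$, let $\lambda = (1, 2, \ldots, m)$, let $\mathcal{X}_\lambda$ be the set of states reachable from $\lambda$ by finitely many swaps of adjacent levels, and $\overline{\pi}_\lambda = \overline{\pi}/\overline{\pi}(\mathcal{X}_\lambda)$ on $\mathcal{X}_\lambda$. Let $S \subseteq \mathcal{X}_\lambda$ be the set of states $\xi$ for which there is a sequence $\lambda = \tau^0,\ldots,\tau^N = \xi$, each obtained from the previous by swapping the entries of two adjacent levels, such that every $\tau^s$ differs from $\lambda$ in at most $\lfloor\log_2 L\rfloor - 1$ coordinates. Then $\overline{\pi}_\lambda(\mathcal{X}_\lambda\setminus S) > \frac{1}{4e(L+1)^6}$.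
   Context: A swap of adjacent levels maps $\xi$ to $(j-1,j)\xi$, the vector with entries at positions $j-1$ and $j$ exchanged, $j\in\{1,\ldots,L\}$. Two states differ in coordinate $\ell$ if their $\ell$-th entries are unequal. *)

theory Defs
  imports Complex_Main
begin

text \<open>States are lists of length L+1; entry at position i (level i, 0 \<le> i \<le> L)
  lies in [m] = {1..m}, m = L+1.\<close>

definition gam :: "nat \<Rightarrow> real" where
  "gam L = (real L + 1) ^ 3"

text \<open>w_i(k); exponents are integers and may be negative.\<close>
definition wt :: "nat \<Rightarrow> nat \<Rightarrow> nat \<Rightarrow> real" where
  "wt L i k = gam L powi (2 * (int i + 1) * int k - (int k)^2 + 1)
     + (\<Sum>r\<in>{0..L}. gam L powi ((2 * int r + 1) * (int i + 1) - (int r)^2 - int r))"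

definition piA :: "nat \<Rightarrow> nat \<Rightarrow> nat \<Rightarrow> real" where
  "piA L i k = wt L i k / (\<Sum>h\<in>{1..L+1}. wt L i h)"

definition pibar :: "nat \<Rightarrow> nat list \<Rightarrow> real" where
  "pibar L \<xi> = (\<Prod>i\<in>{0..L}. piA L i (\<xi> ! i))"

definition lam :: "nat \<Rightarrow> nat list" where
  "lam L = map Suc [0..<L+1]"

definition swp :: "nat \<Rightarrow> nat list \<Rightarrow> nat list" where
  "swp j \<xi> = \<xi>[j - 1 := \<xi> ! j, j := \<xi> ! (j - 1)]"

definition step :: "nat \<Rightarrow> nat list \<Rightarrow> nat list \<Rightarrow> bool" where
  "step L \<xi> \<eta> \<longleftrightarrow> (\<exists>j\<in>{1..L}. \<eta> = swp j \<xi>)"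

definition ndiff :: "nat \<Rightarrow> nat list \<Rightarrow> nat list \<Rightarrow> nat" where
  "ndiff L \<xi> \<eta> = card {l. l \<le> L \<and> \<xi> ! l \<noteq> \<eta> ! l}"

definition Xlam :: "nat \<Rightarrow> nat list set" where
  "Xlam L = {\<xi>. \<exists>N \<tau>. \<tau> 0 = lam L \<and> \<tau> N = \<xi> \<and> (\<forall>s<N. step L (\<tau> s) (\<tau> (Suc s)))}"

definition Sset :: "nat \<Rightarrow> nat list set" where
  "Sset L = {\<xi>. \<exists>N \<tau>. \<tau> 0 = lam L \<and> \<tau> N = \<xi> \<and> (\<forall>s<N. step L (\<tau> s) (\<tau> (Suc s)))
      \<and> (\<forall>s\<le>N. int (ndiff L (\<tau> s) (lam L)) \<le> \<lfloor>log 2 (real L)\<rfloor> - 1)}"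

definition pibar_lam :: "nat \<Rightarrow> nat list set \<Rightarrow> real" where
  "pibar_lam L A = (\<Sum>\<xi>\<in>A. pibar L \<xi>) / (\<Sum>\<xi>\<in>Xlam L. pibar L \<xi>)"

end

theory Submission
  imports Defs "HOL-Library.FuncSet"
begin


lemma swp_nth:
  assumes "0 < j" "j < length xs" "p < length xs"
  shows "swp j xs ! p = (if p = j - 1 then xs ! j else if p = j then xs ! (j - 1) else xs ! p)"
  using assms by (auto simp: swp_def nth_list_update)

lemma swp_length[simp]: "length (swp j xs) = length xs"
  by (simp add: swp_def)

lemma swp_distinct:
  assumes "0 < j" "j < length xs"
  shows "distinct (swp j xs) = distinct xs"
  using assms unfolding swp_def by (intro distinct_swap) auto

lemma swp_set:
  assumes "0 < j" "j < length xs"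
  shows "set (swp j xs) = set xs"
  using assms unfolding swp_def by (intro set_swap) auto

lemma swp_swp:
  assumes "0 < j" "j < length xs"
  shows "swp j (swp j xs) = xs"
  using assms by (intro nth_equalityI) (auto simp: swp_nth)

definition adj :: "nat list \<Rightarrow> nat list \<Rightarrow> bool" where
  "adj xs ys \<longleftrightarrow> (\<exists>j. 0 < j \<and> j < length xs \<and> ys = swp j xs)"

lemma adj_sym: "adj xs ys \<Longrightarrow> adj ys xs"
  unfolding adj_def by (metis swp_length swp_swp)

lemma adj_length: "adj xs ys \<Longrightarrow> length ys = length xs"
  unfolding adj_def by auto

lemma adj_distinct: "adj xs ys \<Longrightarrow> distinct ys = distinct xs"
  unfolding adj_def using swp_distinct by blast

lemma adj_set: "adj xs ys \<Longrightarrow> set ys = set xs"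
  unfolding adj_def using swp_set by blast

definition posn :: "nat list \<Rightarrow> nat \<Rightarrow> nat" where
  "posn xs v = (LEAST p. p < length xs \<and> xs ! p = v)"

lemma posn:
  assumes "v \<in> set xs"
  shows "posn xs v < length xs \<and> xs ! posn xs v = v"
proof -
  from assms obtain p where "p < length xs" "xs ! p = v" by (auto simp: in_set_conv_nth)
  then show ?thesis unfolding posn_def using LeastI[of "\<lambda>p. p < length xs \<and> xs ! p = v" p] by simp
qed

lemma posn_eq:
  assumes "distinct xs" "p < length xs" "xs ! p = v"
  shows "posn xs v = p"
proof -
  have v: "v \<in> set xs" using assms by auto
  from posn[OF v] assms show ?thesis using nth_eq_iff_index_eq by blast
qed

lemma posn_swp:
  assumes "0 < j" "j < length xs" "distinct xs" "v \<in> set xs"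
  shows "posn (swp j xs) v = (if posn xs v = j - 1 then j else if posn xs v = j then j - 1 else posn xs v)"
proof -
  let ?p = "posn xs v"
  have p: "?p < length xs" "xs ! ?p = v" using posn[OF assms(4)] by auto
  have d: "distinct (swp j xs)" using swp_distinct assms by auto
  show ?thesis
  proof (cases "?p = j - 1")
    case True
    then show ?thesis using assms p by (intro posn_eq[OF d]) (auto simp: swp_nth)
  next
    case False
    note F = this
    show ?thesis
    proof (cases "?p = j")
      case True
      then show ?thesis using assms p F by (intro posn_eq[OF d]) (auto simp: swp_nth)
    next
      case False
      then show ?thesis using assms p F by (intro posn_eq[OF d]) (auto simp: swp_nth)
    qed
  qed
qed

lemma cross_up:
  assumes "adj xs ys" "distinct xs" "v \<in> set xs" "posn xs v < c" "c \<le> posn ys v"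
  shows "posn xs v = c - 1 \<and> posn ys v = c \<and> ys = swp c xs \<and> 0 < c \<and> c < length xs"
proof -
  obtain j where j: "0 < j" "j < length xs" "ys = swp j xs" using assms(1) adj_def by auto
  have e: "posn ys v = (if posn xs v = j - 1 then j else if posn xs v = j then j - 1 else posn xs v)"
    using posn_swp[OF j(1,2) assms(2,3)] j(3) by simp
  have "c = j" using e assms(4,5) j by (auto split: if_splits)
  then show ?thesis using e assms(4,5) j by (auto split: if_splits)
qed

lemma cross_down:
  assumes "adj xs ys" "distinct xs" "v \<in> set xs" "c \<le> posn xs v" "posn ys v < c"
  shows "posn xs v = c \<and> posn ys v = c - 1 \<and> ys = swp c xs \<and> 0 < c \<and> c < length xs"
proof -
  obtain j where j: "0 < j" "j < length xs" "ys = swp j xs" using assms(1) adj_def by auto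
  have e: "posn ys v = (if posn xs v = j - 1 then j else if posn xs v = j then j - 1 else posn xs v)"
    using posn_swp[OF j(1,2) assms(2,3)] j(3) by simp
  have "c = j" using e assms(4,5) j by (auto split: if_splits)
  then show ?thesis using e assms(4,5) j by (auto split: if_splits)
qed

definition dset :: "(nat \<Rightarrow> nat) \<Rightarrow> nat list \<Rightarrow> nat \<Rightarrow> nat \<Rightarrow> nat set" where
  "dset g xs a b = {p. a \<le> p \<and> p < b \<and> xs ! p \<noteq> g p}"

definition cnt :: "(nat \<Rightarrow> nat) \<Rightarrow> nat list \<Rightarrow> nat \<Rightarrow> nat \<Rightarrow> nat" where
  "cnt g xs a b = card (dset g xs a b)"

definition clean :: "(nat \<Rightarrow> nat) \<Rightarrow> nat list \<Rightarrow> nat \<Rightarrow> nat \<Rightarrow> bool" where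
  "clean g xs a b \<longleftrightarrow> (\<forall>p. a \<le> p \<and> p < b \<longrightarrow> xs ! p = g p)"

lemma finite_dset: "finite (dset g xs a b)"
  by (rule finite_subset[of _ "{a..<b}"]) (auto simp: dset_def)

lemma clean_cnt: "clean g xs a b \<longleftrightarrow> cnt g xs a b = 0"
  unfolding clean_def cnt_def using finite_dset[of g xs a b] by (auto simp: dset_def)

lemma cnt_split:
  assumes "a \<le> m" "m \<le> b"
  shows "cnt g xs a b = cnt g xs a m + cnt g xs m b"
proof -
  have "dset g xs a b = dset g xs a m \<union> dset g xs m b" using assms by (auto simp: dset_def)
  moreover have "dset g xs a m \<inter> dset g xs m b = {}" by (auto simp: dset_def)
  ultimately show ?thesis unfolding cnt_def by (simp add: card_Un_disjoint finite_dset)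
qed

lemma budget_left:
  assumes "a \<le> m" "m \<le> b" "cnt g xs a b \<le> Suc k" "\<not> clean g xs m b"
  shows "cnt g xs a m \<le> k"
  using cnt_split[OF assms(1,2), of g xs] assms(3,4) clean_cnt[of g xs m b] by linarith

lemma budget_right:
  assumes "a \<le> m" "m \<le> b" "cnt g xs a b \<le> Suc k" "\<not> clean g xs a m"
  shows "cnt g xs m b \<le> k"
  using cnt_split[OF assms(1,2), of g xs] assms(3,4) clean_cnt[of g xs a m] by linarith

lemma cnt_swp_le:
  assumes "ys = swp c xs" "0 < c" "c < length xs"
    "a \<le> c - 1 \<and> c - 1 < b \<Longrightarrow> xs ! (c - 1) \<noteq> g (c - 1)"
    "a \<le> c \<and> c < b \<Longrightarrow> xs ! c \<noteq> g c"
    "b \<le> length xs"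
  shows "cnt g ys a b \<le> cnt g xs a b"
proof -
  have "dset g ys a b \<subseteq> dset g xs a b"
  proof
    fix p assume p: "p \<in> dset g ys a b"
    then have pw: "a \<le> p" "p < b" "ys ! p \<noteq> g p" by (auto simp: dset_def)
    have pl: "p < length xs" using pw assms(6) by simp
    show "p \<in> dset g xs a b"
    proof (cases "p = c - 1 \<or> p = c")
      case True
      then show ?thesis using pw assms(4,5) by (auto simp: dset_def)
    next
      case False
      then have "ys ! p = xs ! p" using assms(1-3) pl by (simp add: swp_nth)
      then show ?thesis using pw by (auto simp: dset_def)
    qed
  qed
  then show ?thesis unfolding cnt_def by (simp add: card_mono finite_dset)
qed

lemma cnt_swp_eq:
  assumes "ys = swp c xs" "0 < c" "c < length xs" "b \<le> length xs"
    "\<And>p. a \<le> p \<Longrightarrow> p < b \<Longrightarrow> p \<noteq> c - 1 \<and> p \<noteq> c"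
  shows "cnt g ys a b = cnt g xs a b"
proof -
  have "dset g ys a b = dset g xs a b"
    using assms by (auto simp: dset_def swp_nth)
  then show ?thesis by (simp add: cnt_def)
qed

definition path :: "(nat \<Rightarrow> nat list) \<Rightarrow> nat \<Rightarrow> nat \<Rightarrow> bool" where
  "path \<rho> E N \<longleftrightarrow> (\<forall>t\<le>E. length (\<rho> t) = N \<and> distinct (\<rho> t)) \<and> (\<forall>t<E. adj (\<rho> t) (\<rho> (Suc t)))"

lemma path_shift:
  assumes "path \<rho> E N" "R \<le> T" "T \<le> E"
  shows "path (\<lambda>i. \<rho> (R + i)) (T - R) N"
  using assms unfolding path_def by auto

lemma path_rev:
  assumes "path \<rho> E N" "q \<le> r" "r \<le> E"
  shows "path (\<lambda>i. \<rho> (r - i)) (r - q) N"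
proof -
  have A: "\<forall>t\<le>r - q. length (\<rho> (r - t)) = N \<and> distinct (\<rho> (r - t))"
    using assms unfolding path_def by auto
  have B: "\<forall>t<r - q. adj (\<rho> (r - t)) (\<rho> (r - Suc t))"
  proof (intro allI impI)
    fix t assume t: "t < r - q"
    then have "adj (\<rho> (r - Suc t)) (\<rho> (Suc (r - Suc t)))" using assms unfolding path_def by auto
    moreover have "Suc (r - Suc t) = r - t" using t by simp
    ultimately show "adj (\<rho> (r - t)) (\<rho> (r - Suc t))" using adj_sym by simp
  qed
  show ?thesis unfolding path_def using A B by simp
qed

lemma path_set:
  assumes "path \<rho> E N" "t \<le> E"
  shows "set (\<rho> t) = set (\<rho> 0)"
  using assms(2)
proof (induction t)
  case 0 then show ?case by simp
next
  case (Suc t)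
  then have "adj (\<rho> t) (\<rho> (Suc t))" using assms(1) unfolding path_def by auto
  then show ?case using Suc adj_set by simp
qed

lemma ex_last_aux:
  "P a \<Longrightarrow> (a::nat) \<le> b \<Longrightarrow> \<exists>R. a \<le> R \<and> R \<le> b \<and> P R \<and> (\<forall>t. R < t \<and> t \<le> b \<longrightarrow> \<not> P t)"
proof (induction b)
  case 0 then show ?case by auto
next
  case (Suc b)
  show ?case
  proof (cases "P (Suc b)")
    case True then show ?thesis using Suc.prems by (intro exI[of _ "Suc b"]) auto
  next
    case False
    show ?thesis
    proof (cases "a = Suc b")
      case True then show ?thesis using Suc.prems False by simp
    next
      case False': False
      then have "a \<le> b" using Suc.prems by simp
      then obtain R where "a \<le> R \<and> R \<le> b \<and> P R \<and> (\<forall>t. R < t \<and> t \<le> b \<longrightarrow> \<not> P t)"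
        using Suc.IH Suc.prems by blast
      then show ?thesis using False by (intro exI[of _ R]) (auto simp: le_Suc_eq)
    qed
  qed
qed

lemma ex_last:
  assumes "P a" "(a::nat) \<le> b"
  obtains R where "a \<le> R" "R \<le> b" "P R" "\<And>t. R < t \<Longrightarrow> t \<le> b \<Longrightarrow> \<not> P t"
  using ex_last_aux[of P a b] assms by blast

lemma ex_first:
  assumes "P (b::nat)"
  obtains T where "T \<le> b" "P T" "\<And>t. t < T \<Longrightarrow> \<not> P t"
proof -
  have "(LEAST t. P t) \<le> b" using assms by (rule Least_le)
  moreover have "P (LEAST t. P t)" using assms by (rule LeastI)
  moreover have "\<And>t. t < (LEAST t. P t) \<Longrightarrow> \<not> P t" using not_less_Least by blast
  ultimately show ?thesis using that by blast
qed


section \<open>The window-crossing lemma\<close>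

definition WV :: "nat \<Rightarrow> bool" where
  "WV k \<longleftrightarrow> (\<forall>\<rho> E N g a b v. path \<rho> E N \<longrightarrow> inj_on g {..<N} \<longrightarrow> b \<le> N \<longrightarrow> a + 2^k \<le> b
     \<longrightarrow> clean g (\<rho> 0) a b \<longrightarrow> (\<forall>p. a \<le> p \<and> p < b \<longrightarrow> g p \<noteq> v) \<longrightarrow> v \<in> set (\<rho> 0)
     \<longrightarrow> posn (\<rho> 0) v < a \<longrightarrow> (\<forall>t\<le>E. cnt g (\<rho> t) a b \<le> k) \<longrightarrow> (\<forall>t\<le>E. posn (\<rho> t) v < b))"

definition WV' :: "nat \<Rightarrow> bool" where
  "WV' k \<longleftrightarrow> (\<forall>\<rho> E N g a b v. path \<rho> E N \<longrightarrow> inj_on g {..<N} \<longrightarrow> b \<le> N \<longrightarrow> a + 2^k \<le> b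
     \<longrightarrow> clean g (\<rho> 0) a b \<longrightarrow> (\<forall>p. a \<le> p \<and> p < b \<longrightarrow> g p \<noteq> v) \<longrightarrow> v \<in> set (\<rho> 0)
     \<longrightarrow> b \<le> posn (\<rho> 0) v \<longrightarrow> (\<forall>t\<le>E. cnt g (\<rho> t) a b \<le> k) \<longrightarrow> (\<forall>t\<le>E. a \<le> posn (\<rho> t) v))"

lemma WV_D:
  assumes "WV k" "path \<rho> E N" "inj_on g {..<N}" "b \<le> N" "a + 2^k \<le> b" "clean g (\<rho> 0) a b"
    "\<And>p. a \<le> p \<Longrightarrow> p < b \<Longrightarrow> g p \<noteq> v" "v \<in> set (\<rho> 0)" "posn (\<rho> 0) v < a"
    "\<And>t. t \<le> E \<Longrightarrow> cnt g (\<rho> t) a b \<le> k" "t \<le> E"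
  shows "posn (\<rho> t) v < b"
  using assms unfolding WV_def by blast

lemma WV'_D:
  assumes "WV' k" "path \<rho> E N" "inj_on g {..<N}" "b \<le> N" "a + 2^k \<le> b" "clean g (\<rho> 0) a b"
    "\<And>p. a \<le> p \<Longrightarrow> p < b \<Longrightarrow> g p \<noteq> v" "v \<in> set (\<rho> 0)" "b \<le> posn (\<rho> 0) v"
    "\<And>t. t \<le> E \<Longrightarrow> cnt g (\<rho> t) a b \<le> k" "t \<le> E"
  shows "a \<le> posn (\<rho> t) v"
  using assms unfolding WV'_def by blast

lemma WV_0: "WV 0"
  unfolding WV_def
proof (intro allI impI)
  fix \<rho> E N g a b v
  assume path: "path \<rho> E N" and inj: "inj_on g {..<N}" and bN: "b \<le> N" and ab: "a + 2^0 \<le> b"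
    and cl0: "clean g (\<rho> 0) a b" and gv: "\<forall>p. a \<le> p \<and> p < b \<longrightarrow> g p \<noteq> v"
    and vin: "v \<in> set (\<rho> 0)" and v0: "posn (\<rho> 0) v < a" and bud: "\<forall>t\<le>E. cnt g (\<rho> t) a b \<le> 0"
  have cl: "clean g (\<rho> t) a b" if "t \<le> E" for t using bud that clean_cnt by auto
  have main: "t \<le> E \<longrightarrow> posn (\<rho> t) v < a" for t
  proof (induction t)
    case 0 then show ?case using v0 by simp
  next
    case (Suc t)
    show ?case
    proof
      assume St: "Suc t \<le> E"
      have Pt: "posn (\<rho> t) v < a" using Suc St by simp
      show "posn (\<rho> (Suc t)) v < a"
      proof (rule ccontr)
        assume "\<not> posn (\<rho> (Suc t)) v < a"
        then have ge: "a \<le> posn (\<rho> (Suc t)) v" by simp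
        have adj: "adj (\<rho> t) (\<rho> (Suc t))" using path St unfolding path_def by auto
        have dis: "distinct (\<rho> t)" using path St unfolding path_def by auto
        have vt: "v \<in> set (\<rho> t)" using path_set[OF path, of t] St vin by simp
        have c: "posn (\<rho> (Suc t)) v = a" using cross_up[OF adj dis vt Pt ge] by blast
        have vS: "v \<in> set (\<rho> (Suc t))" using path_set[OF path, of "Suc t"] St vin by simp
        have "\<rho> (Suc t) ! a = v" using posn[OF vS] c by simp
        moreover have "\<rho> (Suc t) ! a = g a" using cl[OF St] ab unfolding clean_def by simp
        ultimately show False using gv ab by auto
      qed
    qed
  qed
  fix t assume tE: "t \<le> E"
  show "posn (\<rho> t) v < b" using main[of t] tE ab by simp
qed

lemma rev_swp:
  assumes "length xs = N" "0 < j" "j < N"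
  shows "rev (swp j xs) = swp (N - j) (rev xs)"
proof (rule nth_equalityI)
  show "length (rev (swp j xs)) = length (swp (N - j) (rev xs))" by simp
next
  fix p assume "p < length (rev (swp j xs))"
  then have p: "p < N" using assms by simp
  show "rev (swp j xs) ! p = swp (N - j) (rev xs) ! p"
    using assms p by (auto simp: rev_nth swp_nth)
qed

lemma posn_rev:
  assumes "distinct xs" "v \<in> set xs"
  shows "posn (rev xs) v = length xs - 1 - posn xs v"
proof -
  have p: "posn xs v < length xs" "xs ! posn xs v = v" using posn[OF assms(2)] by auto
  show ?thesis using p assms by (intro posn_eq) (auto simp: rev_nth)
qed

lemma dset_rev:
  assumes "length xs = N" "b \<le> N"
  shows "dset (\<lambda>p. g (N - 1 - p)) (rev xs) (N - b) (N - a) = (\<lambda>p. N - 1 - p) ` dset g xs a b"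
proof (intro set_eqI iffI)
  fix p assume "p \<in> dset (\<lambda>p. g (N - 1 - p)) (rev xs) (N - b) (N - a)"
  then have p: "N - b \<le> p" "p < N - a" "rev xs ! p \<noteq> g (N - 1 - p)" by (auto simp: dset_def)
  have "N - 1 - p \<in> dset g xs a b" using p assms by (auto simp: dset_def rev_nth)
  moreover have "p = N - 1 - (N - 1 - p)" using p by simp
  ultimately show "p \<in> (\<lambda>p. N - 1 - p) ` dset g xs a b" by blast
next
  fix p assume "p \<in> (\<lambda>p. N - 1 - p) ` dset g xs a b"
  then obtain q where q: "q \<in> dset g xs a b" "p = N - 1 - q" by blast
  then have "a \<le> q" "q < b" "xs ! q \<noteq> g q" by (auto simp: dset_def)
  then show "p \<in> dset (\<lambda>p. g (N - 1 - p)) (rev xs) (N - b) (N - a)"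
    using q(2) assms by (auto simp: dset_def rev_nth)
qed

lemma cnt_rev:
  assumes "length xs = N" "b \<le> N"
  shows "cnt (\<lambda>p. g (N - 1 - p)) (rev xs) (N - b) (N - a) = cnt g xs a b"
proof -
  have "inj_on (\<lambda>p. N - 1 - p) (dset g xs a b)"
    by (rule inj_onI) (use assms in \<open>auto simp: dset_def\<close>)
  then show ?thesis unfolding cnt_def using dset_rev[OF assms] by (simp add: card_image)
qed

lemma clean_rev:
  assumes "length xs = N" "b \<le> N"
  shows "clean (\<lambda>p. g (N - 1 - p)) (rev xs) (N - b) (N - a) = clean g xs a b"
  using cnt_rev[OF assms] clean_cnt by metis

lemma WV_mirror: "WV k \<Longrightarrow> WV' k"
  unfolding WV'_def
proof (intro allI impI)
  fix \<rho> E N g a b v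
  assume W: "WV k" and path: "path \<rho> E N" and inj: "inj_on g {..<N}" and bN: "b \<le> N" and ab: "a + 2^k \<le> b"
    and cl0: "clean g (\<rho> 0) a b" and gv: "\<forall>p. a \<le> p \<and> p < b \<longrightarrow> g p \<noteq> v"
    and vin: "v \<in> set (\<rho> 0)" and v0: "b \<le> posn (\<rho> 0) v" and bud: "\<forall>t\<le>E. cnt g (\<rho> t) a b \<le> k"
  define \<rho>' where "\<rho>' t = rev (\<rho> t)" for t
  define g' where "g' p = g (N - 1 - p)" for p
  have g'eq: "g' = (\<lambda>p. g (N - 1 - p))" by (simp add: g'_def fun_eq_iff)
  have len: "length (\<rho> t) = N" if "t \<le> E" for t using path that unfolding path_def by auto
  have dis: "distinct (\<rho> t)" if "t \<le> E" for t using path that unfolding path_def by auto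
  have path': "path \<rho>' E N"
    unfolding path_def
  proof (intro conjI allI impI)
    fix t assume "t \<le> E" then show "length (\<rho>' t) = N" using len by (simp add: \<rho>'_def)
  next
    fix t assume "t \<le> E" then show "distinct (\<rho>' t)" using dis by (simp add: \<rho>'_def)
  next
    fix t assume t: "t < E"
    then obtain j where j: "0 < j" "j < length (\<rho> t)" "\<rho> (Suc t) = swp j (\<rho> t)"
      using path unfolding path_def adj_def by auto
    have "\<rho>' (Suc t) = swp (N - j) (\<rho>' t)" using rev_swp[of "\<rho> t" N j] j len t by (simp add: \<rho>'_def)
    moreover have "0 < N - j" "N - j < length (\<rho>' t)" using j len t by (auto simp: \<rho>'_def)
    ultimately show "adj (\<rho>' t) (\<rho>' (Suc t))" unfolding adj_def by blast
  qed
  have inj': "inj_on g' {..<N}"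
  proof (rule inj_onI)
    fix p q assume "p \<in> {..<N}" "q \<in> {..<N}" "g' p = g' q"
    then have "N - 1 - p = N - 1 - q" using inj unfolding g'_def inj_on_def by auto
    then show "p = q" using \<open>p \<in> {..<N}\<close> \<open>q \<in> {..<N}\<close> by auto
  qed
  have posr: "posn (\<rho>' t) v = N - 1 - posn (\<rho> t) v" if "t \<le> E" for t
    using posn_rev[OF dis[OF that]] path_set[OF path that] vin len[OF that] by (simp add: \<rho>'_def)
  have P_lt: "posn (\<rho> t) v < N" if "t \<le> E" for t
    using posn[of v "\<rho> t"] path_set[OF path that] vin len[OF that] by simp
  have "(1::nat) \<le> 2^k" by simp
  then have aN: "a < N" using ab bN by linarith
  have key: "posn (\<rho>' t) v < N - a" if t: "t \<le> E" for t
  proof (rule WV_D[where a="N - b" and b="N - a" and v=v and k=k, OF W path' inj'])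
    show "N - a \<le> N" by simp
    show "N - b + 2^k \<le> N - a" using ab bN by simp
    show "clean g' (\<rho>' 0) (N - b) (N - a)"
    proof -
      show ?thesis using clean_rev[OF len[of 0] bN, of g a] cl0 by (simp add: \<rho>'_def g'eq)
    qed
    show "g' p \<noteq> v" if "N - b \<le> p" "p < N - a" for p
    proof -
      have "a \<le> N - 1 - p" "N - 1 - p < b" using that bN aN by linarith+
      then show ?thesis using gv unfolding g'_def by blast
    qed
    show "v \<in> set (\<rho>' 0)" using vin by (simp add: \<rho>'_def)
    show "posn (\<rho>' 0) v < N - b" using posr[of 0] P_lt[of 0] v0 by simp
    show "\<And>t. t \<le> E \<Longrightarrow> cnt g' (\<rho>' t) (N - b) (N - a) \<le> k"
      using cnt_rev[OF len bN, of _ g a] bud by (simp add: \<rho>'_def g'eq)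
    show "t \<le> E" by (rule t)
  qed
  fix t assume t: "t \<le> E"
  have "N - 1 - posn (\<rho> t) v < N - a" using key[OF t] posr[OF t] by simp
  then show "a \<le> posn (\<rho> t) v" using P_lt[OF t] by linarith
qed


lemma take_mem_iff:
  assumes "distinct xs" "v \<in> set xs"
  shows "v \<in> set (take m xs) \<longleftrightarrow> posn xs v < m"
proof
  assume "v \<in> set (take m xs)"
  then obtain p where p: "p < length (take m xs)" "take m xs ! p = v" by (auto simp: in_set_conv_nth)
  then have "p < m" "p < length xs" "xs ! p = v" by auto
  then show "posn xs v < m" using posn_eq[OF assms(1)] by simp
next
  assume "posn xs v < m"
  moreover have "posn xs v < length xs" "xs ! posn xs v = v" using posn[OF assms(2)] by auto
  ultimately show "v \<in> set (take m xs)" by (auto simp: in_set_conv_nth intro!: exI[of _ "posn xs v"])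
qed

lemma WV_step:
  assumes IH: "WV k" "WV' k"
  shows "WV (Suc k)"
  unfolding WV_def
proof (intro allI impI)
  fix \<rho> E N g a b v t1
  assume path: "path \<rho> E N" and inj: "inj_on g {..<N}" and bN: "b \<le> N" and ab: "a + 2^Suc k \<le> b"
    and cl0: "clean g (\<rho> 0) a b" and gv: "\<forall>p. a \<le> p \<and> p < b \<longrightarrow> g p \<noteq> v"
    and vin: "v \<in> set (\<rho> 0)" and v0: "posn (\<rho> 0) v < a" and bud: "\<forall>t\<le>E. cnt g (\<rho> t) a b \<le> Suc k"
    and t1E: "t1 \<le> E"
  define m where "m = a + 2^k"
  have am: "a \<le> m" and mb: "m + 2^k \<le> b" and amk: "a + 2^k \<le> m" using ab by (auto simp: m_def)
  have pk: "(1::nat) \<le> 2^k" by simp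
  have mlb: "m < b" using mb pk by linarith
  have mN: "m \<le> N" using mlb bN by linarith
  have m0: "0 < m" using pk by (simp add: m_def)
  have len: "length (\<rho> t) = N" if "t \<le> E" for t using path that unfolding path_def by auto
  have dis: "distinct (\<rho> t)" if "t \<le> E" for t using path that unfolding path_def by auto
  have adjt: "adj (\<rho> t) (\<rho> (Suc t))" if "t < E" for t using path that unfolding path_def by auto
  have setE: "set (\<rho> t) = set (\<rho> 0)" if "t \<le> E" for t using path_set[OF path that] .
  have budt: "cnt g (\<rho> t) a b \<le> Suc k" if "t \<le> E" for t using bud that by auto
  define P where "P t = posn (\<rho> t) v" for t
  have vint: "v \<in> set (\<rho> t)" if "t \<le> E" for t using setE[OF that] vin by simp
  have Pnth: "\<rho> t ! P t = v" "P t < N" if "t \<le> E" for t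
    using posn[OF vint[OF that]] len[OF that] by (auto simp: P_def)
  have gvW: "g p \<noteq> v" if "a \<le> p" "p < b" for p using gv that by blast
  show "posn (\<rho> t1) v < b"
  proof (rule ccontr)
    assume "\<not> posn (\<rho> t1) v < b"
    then have "\<not> P t1 < b" by (simp add: P_def)
    then obtain T where T: "T \<le> t1" "\<not> P T < b" "\<And>t. t < T \<Longrightarrow> \<not> \<not> P t < b"
      by (rule ex_first[where P="\<lambda>t. \<not> P t < b"]) blast
    have TE: "T \<le> E" using T t1E by simp
    have Tbefore: "P t < b" if "t < T" for t using T(3)[OF that] by simp
    have "T \<noteq> 0"
    proof
      assume "T = 0"
      then have "b \<le> posn (\<rho> 0) v" using T(2) by (simp add: P_def)
      then show False using v0 am mlb by linarith
    qed
    then obtain T0 where T0: "T = Suc T0" by (cases T) auto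
    have T0E: "T0 < E" using TE T0 by simp
    have cr: "P T0 = b - 1 \<and> P T = b \<and> \<rho> T = swp b (\<rho> T0) \<and> 0 < b \<and> b < length (\<rho> T0)"
      using cross_up[OF adjt[OF T0E] dis[of T0] vint[of T0], of b] T0E T(2) Tbefore[of T0] T0
      unfolding P_def by auto
    obtain P2 where P2: "P2 \<le> T0" "P P2 < m" "\<And>t. P2 < t \<Longrightarrow> t \<le> T0 \<Longrightarrow> \<not> P t < m"
      using ex_last[where P="\<lambda>t. P t < m" and a=0 and b=T0] v0 am by (auto simp: P_def)
    have clW2_0: "clean g (\<rho> 0) m b" using cl0 am unfolding clean_def by auto
    obtain R where R: "R \<le> P2" "clean g (\<rho> R) m b" "\<And>t. R < t \<Longrightarrow> t \<le> P2 \<Longrightarrow> \<not> clean g (\<rho> t) m b"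
      using ex_last[where P="\<lambda>t. clean g (\<rho> t) m b" and a=0 and b=P2] clW2_0 by auto
    have RT0: "R \<le> T0" using R P2 by simp
    have D2: "\<not> clean g (\<rho> t) m b" if "R < t" "t \<le> T0" for t
    proof (cases "t \<le> P2")
      case True then show ?thesis using R(3) that by simp
    next
      case False
      then have "m \<le> P t" "P t < b" using P2(3)[of t] that Tbefore[of t] T0 by auto
      moreover have "\<rho> t ! P t = v" using Pnth[of t] that T0E by simp
      ultimately show ?thesis using gvW[of "P t"] am unfolding clean_def by auto
    qed
    have PR: "P R < m"
    proof (rule ccontr)
      assume "\<not> P R < m"
      moreover have "P R < b" using Tbefore[of R] RT0 T0 by simp
      moreover have "\<rho> R ! P R = v" using Pnth[of R] RT0 T0E by simp
      ultimately show False using R(2) gvW[of "P R"] am unfolding clean_def by auto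
    qed
    have cntT_W2: "cnt g (\<rho> T) m b \<le> cnt g (\<rho> T0) m b"
    proof (rule cnt_swp_le)
      show "\<rho> T = swp b (\<rho> T0)" "0 < b" "b < length (\<rho> T0)" using cr by auto
      have e1: "\<rho> T0 ! (b - 1) = v" using cr Pnth[of T0] T0E by auto
      have "a \<le> b - 1" "b - 1 < b" using am mlb by linarith+
      then show "\<rho> T0 ! (b - 1) \<noteq> g (b - 1)" using e1 gvW[of "b - 1"] by auto
      show "\<rho> T0 ! b \<noteq> g b" if "m \<le> b \<and> b < b" using that by simp
      show "b \<le> length (\<rho> T0)" using cr by simp
    qed
    have cntT_W1: "cnt g (\<rho> T) a m = cnt g (\<rho> T0) a m"
      by (rule cnt_swp_eq) (use cr mlb in auto)
    show False
    proof (cases "\<exists>t. R < t \<and> t \<le> T0 \<and> clean g (\<rho> t) a m")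
      case False
      have cT0: "cnt g (\<rho> T0) m b \<le> k"
      proof (cases "T0 = R")
        case True then show ?thesis using R(2) clean_cnt by simp
      next
        case F: False
        then have "\<not> clean g (\<rho> T0) a m" using False RT0 by auto
        then show ?thesis using budget_right[OF am, of b g "\<rho> T0" k] budt[of T0] T0E mlb by simp
      qed
      have bud2: "cnt g ((\<lambda>i. \<rho> (R + i)) i) m b \<le> k" if "i \<le> T - R" for i
      proof -
        have "(i = 0) \<or> (0 < i \<and> R + i \<le> T0) \<or> (R + i = T)" using that T0 RT0 by arith
          then consider "i = 0" | "0 < i" "R + i \<le> T0" | "R + i = T" by blast
        then show ?thesis
        proof cases
          case 1 then show ?thesis using R(2) clean_cnt by simp
        next
          case 2
          then have "\<not> clean g (\<rho> (R + i)) a m" using False by auto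
          then show ?thesis using budget_right[OF am, of b g "\<rho> (R+i)" k] budt[of "R+i"] 2 T0E mlb by simp
        next
          case 3 then show ?thesis using cntT_W2 cT0 by simp
        qed
      qed
      have "posn ((\<lambda>i. \<rho> (R + i)) (T - R)) v < b"
      proof (rule WV_D[where a=m and b=b and k=k, OF IH(1) path_shift[OF path, of R T] inj bN mb])
        show "clean g ((\<lambda>i. \<rho> (R + i)) 0) m b" using R(2) by simp
        show "\<And>p. m \<le> p \<Longrightarrow> p < b \<Longrightarrow> g p \<noteq> v" using gvW am by auto
        show "v \<in> set ((\<lambda>i. \<rho> (R + i)) 0)" using vint[of R] RT0 T0E by simp
        show "posn ((\<lambda>i. \<rho> (R + i)) 0) v < m" using PR by (simp add: P_def)
        show "\<And>t. t \<le> T - R \<Longrightarrow> cnt g ((\<lambda>i. \<rho> (R + i)) t) m b \<le> k" using bud2 by blast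
      qed (use RT0 T0 TE in auto)
      then show False using cr RT0 T0 by (simp add: P_def)
    next
      case True
      obtain r where r0: "r \<le> T0" "R < r \<and> r \<le> T0 \<and> clean g (\<rho> r) a m"
          "\<And>t. t < r \<Longrightarrow> \<not> (R < t \<and> t \<le> T0 \<and> clean g (\<rho> t) a m)"
        using True by (metis ex_first[where P="\<lambda>t. R < t \<and> t \<le> T0 \<and> clean g (\<rho> t) a m"])
      have r: "R < r" "r \<le> T0" "clean g (\<rho> r) a m" using r0 by auto
      have rmin: "\<not> clean g (\<rho> t) a m" if "R < t" "t < r" for t using r0(3)[of t] that r by auto
      have rE: "r \<le> E" using r T0E by simp
      have Pr: "\<not> (a \<le> P r \<and> P r < m)"
      proof
        assume "a \<le> P r \<and> P r < m"
        then show False using r(3) Pnth[OF rE] gvW[of "P r"] mlb unfolding clean_def by auto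
      qed
      show False
      proof (cases "P r < a")
        case True
        have cT0: "cnt g (\<rho> T0) a m \<le> k"
        proof (cases "T0 = r")
          case True then show ?thesis using r(3) clean_cnt by simp
        next
          case False
          then have "\<not> clean g (\<rho> T0) m b" using D2[of T0] r by auto
          then show ?thesis using budget_left[OF am, of b g "\<rho> T0" k] budt[of T0] T0E mlb by simp
        qed
        have bud1: "cnt g ((\<lambda>i. \<rho> (r + i)) i) a m \<le> k" if "i \<le> T - r" for i
        proof -
          have "(i = 0) \<or> (0 < i \<and> r + i \<le> T0) \<or> (r + i = T)" using that T0 r by arith
          then consider "i = 0" | "0 < i" "r + i \<le> T0" | "r + i = T" by blast
          then show ?thesis
          proof cases
            case 1 then show ?thesis using r(3) clean_cnt by simp
          next
            case 2
            then have "\<not> clean g (\<rho> (r + i)) m b" using D2[of "r + i"] r by auto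
            then show ?thesis using budget_left[OF am, of b g "\<rho> (r+i)" k] budt[of "r+i"] 2 T0E mlb by simp
          next
            case 3 then show ?thesis using cntT_W1 cT0 by simp
          qed
        qed
        have "posn ((\<lambda>i. \<rho> (r + i)) (T - r)) v < m"
        proof (rule WV_D[where a=a and b=m and k=k, OF IH(1) path_shift[OF path, of r T] inj mN amk])
          show "clean g ((\<lambda>i. \<rho> (r + i)) 0) a m" using r(3) by simp
          show "\<And>p. a \<le> p \<Longrightarrow> p < m \<Longrightarrow> g p \<noteq> v" using gvW mlb by auto
          show "v \<in> set ((\<lambda>i. \<rho> (r + i)) 0)" using vint[OF rE] by simp
          show "posn ((\<lambda>i. \<rho> (r + i)) 0) v < a" using True by (simp add: P_def)
          show "\<And>t. t \<le> T - r \<Longrightarrow> cnt g ((\<lambda>i. \<rho> (r + i)) t) a m \<le> k" using bud1 by blast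
        qed (use r T0 TE in auto)
        then show False using cr r T0 mlb by (simp add: P_def)
      next
        case False
        then have mPr: "m \<le> P r" using Pr by auto
        have PrT: "P r < b" using Tbefore[of r] r T0 by simp
        have RE: "R \<le> E" using RT0 T0E by simp
        define A where "A = set (take m (\<rho> R))"
        define B where "B = set (take m (\<rho> r))"
        have vA: "v \<in> A" unfolding A_def using take_mem_iff[OF dis[OF RE] vint[OF RE]] PR by (simp add: P_def)
        have vB: "v \<notin> B" unfolding B_def using take_mem_iff[OF dis[OF rE] vint[OF rE]] mPr by (simp add: P_def)
        have cA: "card A = m" unfolding A_def using dis[OF RE] len[OF RE] mN
          by (simp add: distinct_card min_def)
        have cB: "card B = m" unfolding B_def using dis[OF rE] len[OF rE] mN
          by (simp add: distinct_card min_def)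
        obtain w where wB: "w \<in> B" and wA: "w \<notin> A"
        proof -
          have "\<not> B \<subseteq> A"
          proof
            assume "B \<subseteq> A"
            then have "B = A" using cA cB by (intro card_subset_eq) (auto simp: A_def)
            then show False using vA vB by simp
          qed
          then show ?thesis using that by blast
        qed
        have wset: "w \<in> set (\<rho> 0)" using wB setE[OF rE] unfolding B_def using in_set_takeD by fastforce
        have wint: "w \<in> set (\<rho> t)" if "t \<le> E" for t using setE[OF that] wset by simp
        define Q where "Q t = posn (\<rho> t) w" for t
        have Qnth: "\<rho> t ! Q t = w" "Q t < N" if "t \<le> E" for t
          using posn[OF wint[OF that]] len[OF that] by (auto simp: Q_def)
        have Qr: "Q r < m" using wB take_mem_iff[OF dis[OF rE] wint[OF rE]] unfolding B_def Q_def by simp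
        have QR: "m \<le> Q R" using wA take_mem_iff[OF dis[OF RE] wint[OF RE]] unfolding A_def Q_def by simp
        show False
        proof (cases "Q r < a")
          case True
          have gw: "g p \<noteq> w" if "a \<le> p" "p < m" for p
          proof
            assume "g p = w"
            then have "\<rho> r ! p = w" using r(3) that unfolding clean_def by auto
            then have "Q r = p" using posn_eq[OF dis[OF rE]] that len[OF rE] mN by (simp add: Q_def)
            then show False using True that by simp
          qed
          obtain q where q: "R \<le> q" "q \<le> r" "m \<le> Q q" "\<And>t. q < t \<Longrightarrow> t \<le> r \<Longrightarrow> \<not> m \<le> Q t"
            using ex_last[where P="\<lambda>t. m \<le> Q t" and a=R and b=r] QR r by auto
          have qr: "q < r" using q Qr by (metis not_le order_le_less)
          have qE: "q < E" using qr rE by simp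
          have crq: "Q q = m \<and> Q (Suc q) = m - 1 \<and> \<rho> (Suc q) = swp m (\<rho> q) \<and> 0 < m \<and> m < length (\<rho> q)"
            using cross_down[OF adjt[OF qE] dis[of q] wint[of q], of m] qE q(3) q(4)[of "Suc q"] qr
            unfolding Q_def by auto
          have cq1: "cnt g (\<rho> (Suc q)) a m \<le> k"
          proof (cases "Suc q = r")
            case True then show ?thesis using r(3) clean_cnt by simp
          next
            case False
            then have "\<not> clean g (\<rho> (Suc q)) m b" using D2[of "Suc q"] q qr r by auto
            then show ?thesis using budget_left[OF am, of b g "\<rho> (Suc q)" k] budt[of "Suc q"] qE mlb by simp
          qed
          have cq: "cnt g (\<rho> q) a m \<le> cnt g (\<rho> (Suc q)) a m"
          proof (rule cnt_swp_le)
            have "length (\<rho> (Suc q)) = length (\<rho> q)" using len qE by simp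
            then show "\<rho> q = swp m (\<rho> (Suc q))" "0 < m" "m < length (\<rho> (Suc q))"
              using crq swp_swp[of m "\<rho> q"] by auto
            have e1: "\<rho> (Suc q) ! (m - 1) = w" using crq Qnth[of "Suc q"] qE by auto
            have "a \<le> m - 1" "m - 1 < m" using amk pk m0 by linarith+
            then show "\<rho> (Suc q) ! (m - 1) \<noteq> g (m - 1)" using e1 gw[of "m - 1"] by auto
            show "\<rho> (Suc q) ! m \<noteq> g m" if "a \<le> m \<and> m < m" using that by simp
            show "m \<le> length (\<rho> (Suc q))" using len qE mN by simp
          qed
          have budr: "cnt g ((\<lambda>i. \<rho> (r - i)) i) a m \<le> k" if "i \<le> r - q" for i
          proof -
            have "(i = 0) \<or> (r - i = q) \<or> (0 < i \<and> q < r - i)" using that by arith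
          then consider "i = 0" | "r - i = q" | "0 < i" "q < r - i" by blast
            then show ?thesis
            proof cases
              case 1 then show ?thesis using r(3) clean_cnt by simp
            next
              case 2 then show ?thesis using cq cq1 by simp
            next
              case 3
              then have "\<not> clean g (\<rho> (r - i)) m b" using D2[of "r - i"] q r by auto
              then show ?thesis using budget_left[OF am, of b g "\<rho> (r - i)" k] budt[of "r - i"] rE mlb by simp
            qed
          qed
          have "posn ((\<lambda>i. \<rho> (r - i)) (r - q)) w < m"
          proof (rule WV_D[where a=a and b=m and k=k, OF IH(1) path_rev[OF path, of q r] inj mN amk])
            show "clean g ((\<lambda>i. \<rho> (r - i)) 0) a m" using r(3) by simp
            show "\<And>p. a \<le> p \<Longrightarrow> p < m \<Longrightarrow> g p \<noteq> w" using gw by auto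
            show "w \<in> set ((\<lambda>i. \<rho> (r - i)) 0)" using wint[OF rE] by simp
            show "posn ((\<lambda>i. \<rho> (r - i)) 0) w < a" using True by (simp add: Q_def)
            show "\<And>t. t \<le> r - q \<Longrightarrow> cnt g ((\<lambda>i. \<rho> (r - i)) t) a m \<le> k" using budr by blast
          qed (use q qr rE in auto)
          then show False using crq q(1) qr by (simp add: Q_def)
        next
          case False
          then have aQ: "a \<le> Q r" by simp
          have gQ: "g (Q r) = w" using r(3) aQ Qr Qnth[OF rE] unfolding clean_def by auto
          have gw2: "g p \<noteq> w" if "m \<le> p" "p < b" for p
          proof
            assume "g p = w"
            then have "g p = g (Q r)" using gQ by simp
            moreover have "p \<in> {..<N}" "Q r \<in> {..<N}" using that bN Qnth[OF rE] by auto
            ultimately have "p = Q r" using inj unfolding inj_on_def by blast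
            then show False using that Qr by simp
          qed
          have QRb: "b \<le> Q R"
          proof (rule ccontr)
            assume "\<not> b \<le> Q R"
            then have "\<rho> R ! Q R = g (Q R)" using R(2) QR unfolding clean_def by auto
            then show False using Qnth[OF RE] gw2[of "Q R"] QR \<open>\<not> b \<le> Q R\<close> by auto
          qed
          obtain r' where r'0: "r' \<le> r" "R < r' \<and> Q r' < m" "\<And>t. t < r' \<Longrightarrow> \<not> (R < t \<and> Q t < m)"
            using r Qr by (metis ex_first[where P="\<lambda>t. R < t \<and> Q t < m"])
          have r': "R < r'" "Q r' < m" using r'0 by auto
          obtain r1 where r1: "r' = Suc r1" using r' by (cases r') auto
          have Rr1: "R \<le> r1" using r' r1 by simp
          have r1E: "r1 < E" using r1 r'0 rE by simp
          have Qr1: "m \<le> Q r1"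
          proof (cases "r1 = R")
            case True then show ?thesis using QR by simp
          next
            case False then show ?thesis using r'0(3)[of r1] r1 Rr1 by auto
          qed
          have crr: "Q r1 = m \<and> Q r' = m - 1 \<and> \<rho> r' = swp m (\<rho> r1) \<and> 0 < m \<and> m < length (\<rho> r1)"
            using cross_down[OF adjt[OF r1E] dis[of r1] wint[of r1], of m] r1E Qr1 r' r1
            unfolding Q_def by auto
          have cr1: "cnt g (\<rho> r1) m b \<le> k"
          proof (cases "r1 = R")
            case True then show ?thesis using R(2) clean_cnt by simp
          next
            case False
            then have "\<not> clean g (\<rho> r1) a m" using rmin[of r1] Rr1 r1 r'0 by auto
            then show ?thesis using budget_right[OF am, of b g "\<rho> r1" k] budt[of r1] r1E mlb by simp
          qed
          have cr': "cnt g (\<rho> r') m b \<le> cnt g (\<rho> r1) m b"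
          proof (rule cnt_swp_le)
            show "\<rho> r' = swp m (\<rho> r1)" "0 < m" "m < length (\<rho> r1)" using crr by auto
            show "\<rho> r1 ! (m - 1) \<noteq> g (m - 1)" if "m \<le> m - 1 \<and> m - 1 < b" using that m0 by linarith
            show "\<rho> r1 ! m \<noteq> g m" using crr Qnth[of r1] r1E gw2[of m] mlb by auto
            show "b \<le> length (\<rho> r1)" using len r1E bN by simp
          qed
          have bud3: "cnt g ((\<lambda>i. \<rho> (R + i)) i) m b \<le> k" if "i \<le> r' - R" for i
          proof -
            have "(i = 0) \<or> (R + i = r') \<or> (0 < i \<and> R + i < r')" using that r' by arith
          then consider "i = 0" | "R + i = r'" | "0 < i" "R + i < r'" by blast
            then show ?thesis
            proof cases
              case 1 then show ?thesis using R(2) clean_cnt by simp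
            next
              case 2 then show ?thesis using cr' cr1 by simp
            next
              case 3
              then have "\<not> clean g (\<rho> (R + i)) a m" using rmin[of "R + i"] r'0 by auto
              then show ?thesis using budget_right[OF am, of b g "\<rho> (R + i)" k] budt[of "R + i"] 3 r'0 rE mlb by simp
            qed
          qed
          have "m \<le> posn ((\<lambda>i. \<rho> (R + i)) (r' - R)) w"
          proof (rule WV'_D[where a=m and b=b and k=k, OF IH(2) path_shift[OF path, of R r'] inj bN mb])
            show "clean g ((\<lambda>i. \<rho> (R + i)) 0) m b" using R(2) by simp
            show "\<And>p. m \<le> p \<Longrightarrow> p < b \<Longrightarrow> g p \<noteq> w" using gw2 by auto
            show "w \<in> set ((\<lambda>i. \<rho> (R + i)) 0)" using wint[OF RE] by simp
            show "b \<le> posn ((\<lambda>i. \<rho> (R + i)) 0) w" using QRb by (simp add: Q_def)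
            show "\<And>t. t \<le> r' - R \<Longrightarrow> cnt g ((\<lambda>i. \<rho> (R + i)) t) m b \<le> k" using bud3 by blast
          qed (use r' r'0 rE in auto)
          then show False using r' by (simp add: Q_def)
        qed
      qed
    qed
  qed
qed

lemma WV_all: "WV k"
proof (induction k)
  case 0 then show ?case by (rule WV_0)
next
  case (Suc k) then show ?case using WV_step WV_mirror by blast
qed



lemma lam_nth: "p \<le> L \<Longrightarrow> lam L ! p = Suc p"
  unfolding lam_def by (simp del: upt_Suc add: nth_map_upt less_Suc_eq_le)

lemma lam_length[simp]: "length (lam L) = Suc L"
  by (simp add: lam_def)

lemma lam_distinct: "distinct (lam L)"
  by (simp add: lam_def distinct_map del: upt_Suc)

definition tgt :: "nat \<Rightarrow> nat list" where
  "tgt L = (lam L)[0 := Suc L, L := 1]"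

lemma tgt_length[simp]: "length (tgt L) = Suc L" by (simp add: tgt_def)

lemma tgt_nth:
  assumes "1 \<le> L" "p \<le> L"
  shows "tgt L ! p = (if p = 0 then Suc L else if p = L then 1 else Suc p)"
  using assms by (auto simp: tgt_def nth_list_update lam_nth)

lemma path_of_steps:
  assumes "\<tau> 0 = lam L" "\<forall>s<N. step L (\<tau> s) (\<tau> (Suc s))"
  shows "path \<tau> N (Suc L)"
proof -
  have inv: "t \<le> N \<longrightarrow> length (\<tau> t) = Suc L \<and> distinct (\<tau> t)" for t
  proof (induction t)
    case 0 then show ?case using assms lam_distinct by simp
  next
    case (Suc t)
    show ?case
    proof
      assume St: "Suc t \<le> N"
      then have IH: "length (\<tau> t) = Suc L" "distinct (\<tau> t)" using Suc by auto
      have "step L (\<tau> t) (\<tau> (Suc t))" using assms(2) St by simp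
      then obtain j where j: "j \<in> {1..L}" "\<tau> (Suc t) = swp j (\<tau> t)" unfolding step_def by blast
      then show "length (\<tau> (Suc t)) = Suc L \<and> distinct (\<tau> (Suc t))"
        using IH swp_distinct[of j "\<tau> t"] by auto
    qed
  qed
  have adj: "adj (\<tau> t) (\<tau> (Suc t))" if "t < N" for t
  proof -
    have "step L (\<tau> t) (\<tau> (Suc t))" using assms(2) that by simp
    then obtain j where j: "j \<in> {1..L}" "\<tau> (Suc t) = swp j (\<tau> t)" unfolding step_def by blast
    moreover have "length (\<tau> t) = Suc L" using inv[of t] that by simp
    ultimately show ?thesis unfolding adj_def by (intro exI[of _ j]) auto
  qed
  show ?thesis unfolding path_def using inv adj by auto
qed

lemma cnt_le_ndiff:
  assumes "length xs = Suc L"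
  shows "cnt Suc xs 1 L \<le> ndiff L xs (lam L)"
proof -
  have "dset Suc xs 1 L \<subseteq> {l. l \<le> L \<and> xs ! l \<noteq> lam L ! l}"
    by (auto simp: dset_def lam_nth)
  moreover have "finite {l. l \<le> L \<and> xs ! l \<noteq> lam L ! l}" by simp
  ultimately show ?thesis unfolding cnt_def ndiff_def by (rule card_mono[rotated])
qed

lemma pow_floor_log:
  assumes "L \<ge> 2"
  shows "1 + 2 ^ nat (\<lfloor>log 2 (real L)\<rfloor> - 1) \<le> L"
proof -
  obtain i where i: "2 ^ i \<le> L" "L < 2 ^ (i + 1)" using ex_power_ivl1[of 2 L] assms by auto
  have fl: "\<lfloor>log 2 (real L)\<rfloor> = int i" using floor_log_nat_eq_if[of 2 i L] i by simp
  have i1: "i \<ge> 1"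
  proof (rule ccontr)
    assume "\<not> i \<ge> 1" then have "i = 0" by simp
    then show False using i assms by simp
  qed
  then obtain j where j: "i = Suc j" by (cases i) auto
  have "nat (\<lfloor>log 2 (real L)\<rfloor> - 1) = j" using fl j by simp
  moreover have "2 * 2 ^ j \<le> L" using i(1) j by simp
  ultimately show ?thesis using assms by simp
qed

lemma tgt_not_S:
  assumes "L \<ge> 2"
  shows "tgt L \<notin> Sset L"
proof
  assume "tgt L \<in> Sset L"
  then obtain N \<tau> where t0: "\<tau> 0 = lam L" and tN: "\<tau> N = tgt L"
    and st: "\<forall>s<N. step L (\<tau> s) (\<tau> (Suc s))"
    and nd: "\<forall>s\<le>N. int (ndiff L (\<tau> s) (lam L)) \<le> \<lfloor>log 2 (real L)\<rfloor> - 1"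
    unfolding Sset_def by blast
  define k where "k = nat (\<lfloor>log 2 (real L)\<rfloor> - 1)"
  have path: "path \<tau> N (Suc L)" using path_of_steps[OF t0 st] .
  have bud: "cnt Suc (\<tau> t) 1 L \<le> k" if "t \<le> N" for t
  proof -
    have "length (\<tau> t) = Suc L" using path that unfolding path_def by auto
    then have "cnt Suc (\<tau> t) 1 L \<le> ndiff L (\<tau> t) (lam L)" by (rule cnt_le_ndiff)
    moreover have "ndiff L (\<tau> t) (lam L) \<le> k" using nd that unfolding k_def by fastforce
    ultimately show ?thesis by simp
  qed
  have p0: "posn (lam L) 1 = 0" using lam_nth[of 0 L] by (intro posn_eq lam_distinct) auto
  have "posn (\<tau> N) 1 < L"
  proof (rule WV_D[where a=1 and b=L and k=k and g=Suc and v=1, OF WV_all path])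
    show "inj_on Suc {..<Suc L}" by simp
    show "L \<le> Suc L" by simp
    show "1 + 2 ^ k \<le> L" using pow_floor_log[OF assms] by (simp add: k_def)
    show "clean Suc (\<tau> 0) 1 L" using t0 by (auto simp: clean_def lam_nth)
    show "\<And>p. 1 \<le> p \<Longrightarrow> p < L \<Longrightarrow> Suc p \<noteq> 1" by simp
    show "1 \<in> set (\<tau> 0)" using t0 lam_nth[of 0 L] nth_mem[of 0 "lam L"] by simp
    show "posn (\<tau> 0) 1 < 1" using t0 p0 by simp
    show "\<And>t. t \<le> N \<Longrightarrow> cnt Suc (\<tau> t) 1 L \<le> k" using bud by blast
  qed simp
  moreover have "posn (\<tau> N) 1 = L"
  proof -
    have "distinct (\<tau> N)" using path unfolding path_def by auto
    moreover have "\<tau> N ! L = 1" using tN tgt_nth[of L L] assms by simp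
    ultimately show ?thesis using tN by (intro posn_eq) auto
  qed
  ultimately show False by simp
qed


lemma lam_in_X: "lam L \<in> Xlam L"
  unfolding Xlam_def by (rule CollectI, rule exI[of _ 0], rule exI[of _ "\<lambda>_. lam L"]) simp

lemma Xlam_step:
  assumes "\<xi> \<in> Xlam L" "1 \<le> j" "j \<le> L"
  shows "swp j \<xi> \<in> Xlam L"
proof -
  obtain N \<tau> where t0: "\<tau> 0 = lam L" and tN: "\<tau> N = \<xi>" and st: "\<forall>s<N. step L (\<tau> s) (\<tau> (Suc s))"
    using assms(1) unfolding Xlam_def by blast
  define \<tau>' where "\<tau>' = \<tau>(Suc N := swp j \<xi>)"
  have "\<tau>' 0 = lam L" using t0 by (simp add: \<tau>'_def)
  moreover have "\<tau>' (Suc N) = swp j \<xi>" by (simp add: \<tau>'_def)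
  moreover have "\<forall>s<Suc N. step L (\<tau>' s) (\<tau>' (Suc s))"
  proof (intro allI impI)
    fix s assume s: "s < Suc N"
    show "step L (\<tau>' s) (\<tau>' (Suc s))"
    proof (cases "s = N")
      case True then show ?thesis using tN assms(2,3) by (auto simp: \<tau>'_def step_def)
    next
      case False then have "s < N" using s by simp
      then show ?thesis using st by (simp add: \<tau>'_def)
    qed
  qed
  ultimately show ?thesis unfolding Xlam_def by blast
qed

definition fw :: "nat \<Rightarrow> nat \<Rightarrow> nat list" where
  "fw L k = map (\<lambda>p. Suc (if p < k then Suc p else if p = k then 0 else p)) [0..<Suc L]"

definition bw :: "nat \<Rightarrow> nat \<Rightarrow> nat list" where
  "bw L j = map (\<lambda>p. Suc (if p = L then 0 else if p + j + 1 = L then L else if p + j + 1 > L then p else Suc p)) [0..<Suc L]"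

lemma fw_nth: "q < Suc L \<Longrightarrow> fw L k ! q = Suc (if q < k then Suc q else if q = k then 0 else q)"
  unfolding fw_def by (simp only: nth_map_upt length_upt) simp

lemma bw_nth: "q < Suc L \<Longrightarrow> bw L j ! q = Suc (if q = L then 0 else if q + j + 1 = L then L else if q + j + 1 > L then q else Suc q)"
  unfolding bw_def by (simp only: nth_map_upt length_upt) simp

lemma fw_len[simp]: "length (fw L k) = Suc L" by (simp add: fw_def)
lemma bw_len[simp]: "length (bw L k) = Suc L" by (simp add: bw_def)

lemma fw0: "fw L 0 = lam L"
proof (rule nth_equalityI)
  fix p assume "p < length (fw L 0)"
  then show "fw L 0 ! p = lam L ! p" using fw_nth[of p L 0] lam_nth[of p L] by simp
qed simp

lemma fw_step:
  assumes "k < L"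
  shows "fw L (Suc k) = swp (Suc k) (fw L k)"
proof (rule nth_equalityI)
  fix p assume p: "p < length (fw L (Suc k))"
  then have p': "p < Suc L" by simp
  have e: "swp (Suc k) (fw L k) ! p = (if p = k then fw L k ! Suc k else if p = Suc k then fw L k ! k else fw L k ! p)"
    using swp_nth[of "Suc k" "fw L k" p] p' assms by simp
  consider "p = k" | "p = Suc k" | "p \<noteq> k" "p \<noteq> Suc k" by blast
  then show "fw L (Suc k) ! p = swp (Suc k) (fw L k) ! p"
  proof cases
    case 1 then show ?thesis using e fw_nth[of p L "Suc k"] fw_nth[of "Suc k" L k] p' assms by simp
  next
    case 2 then show ?thesis using e fw_nth[of p L "Suc k"] fw_nth[of k L k] p' assms by simp
  next
    case 3 then show ?thesis using e fw_nth[of p L "Suc k"] fw_nth[of p L k] p' by simp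
  qed
qed simp

lemma bw0: "bw L 0 = fw L L"
proof (rule nth_equalityI)
  fix p assume "p < length (bw L 0)"
  then have p: "p < Suc L" by simp
  show "bw L 0 ! p = fw L L ! p" using bw_nth[OF p, of 0] fw_nth[OF p, of L] p by auto
qed simp

lemma bw_step:
  assumes "j + 1 < L"
  shows "bw L (Suc j) = swp (L - 1 - j) (bw L j)"
proof (rule nth_equalityI)
  fix p assume p: "p < length (bw L (Suc j))"
  then have p': "p < Suc L" by simp
  define c where "c = L - 1 - j"
  have c: "0 < c" "c < Suc L" "c - 1 + j + 2 = L" "c + j + 1 = L" using assms by (auto simp: c_def)
  have e: "swp c (bw L j) ! p = (if p = c - 1 then bw L j ! c else if p = c then bw L j ! (c - 1) else bw L j ! p)"
    using swp_nth[of c "bw L j" p] p' c by simp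
  consider "p = c - 1" | "p = c" | "p \<noteq> c - 1" "p \<noteq> c" by blast
  then show "bw L (Suc j) ! p = swp (L - 1 - j) (bw L j) ! p"
  proof cases
    case 1 then show ?thesis using e bw_nth[OF p', of "Suc j"] bw_nth[of c L j] c unfolding c_def[symmetric] by auto
  next
    case 2 then show ?thesis using e bw_nth[OF p', of "Suc j"] bw_nth[of "c - 1" L j] c unfolding c_def[symmetric] by auto
  next
    case 3 then show ?thesis using e bw_nth[OF p', of "Suc j"] bw_nth[OF p', of j] c unfolding c_def[symmetric] by auto
  qed
qed simp

lemma bw_last:
  assumes "1 \<le> L"
  shows "bw L (L - 1) = tgt L"
proof (rule nth_equalityI)
  fix p assume "p < length (bw L (L - 1))"
  then have p: "p < Suc L" by simp
  show "bw L (L - 1) ! p = tgt L ! p" using bw_nth[OF p, of "L - 1"] tgt_nth[OF assms, of p] p assms by auto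
qed simp

lemma fw_in: "k \<le> L \<Longrightarrow> fw L k \<in> Xlam L"
proof (induction k)
  case 0 then show ?case using fw0 lam_in_X by simp
next
  case (Suc k) then show ?case using fw_step[of k L] Xlam_step[of "fw L k" L "Suc k"] by simp
qed

lemma bw_in: "j \<le> L - 1 \<Longrightarrow> bw L j \<in> Xlam L"
proof (induction j)
  case 0 then show ?case using bw0 fw_in[of L L] by simp
next
  case (Suc j) then show ?case using bw_step[of j L] Xlam_step[of "bw L j" L "L - 1 - j"] by simp
qed

lemma tgt_in_X: "1 \<le> L \<Longrightarrow> tgt L \<in> Xlam L"
  using bw_in[of "L - 1" L] bw_last by simp

lemma Xlam_props:
  assumes "\<xi> \<in> Xlam L"
  shows "length \<xi> = Suc L \<and> set \<xi> = {1..Suc L}"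
proof -
  obtain N \<tau> where t0: "\<tau> 0 = lam L" and tN: "\<tau> N = \<xi>" and st: "\<forall>s<N. step L (\<tau> s) (\<tau> (Suc s))"
    using assms unfolding Xlam_def by blast
  have path: "path \<tau> N (Suc L)" using path_of_steps[OF t0 st] .
  have "length \<xi> = Suc L" using path tN unfolding path_def by auto
  moreover have "set \<xi> = set (lam L)" using path_set[OF path, of N] t0 tN by simp
  moreover have "set (lam L) = {1..Suc L}"
    by (auto simp: lam_def image_iff simp del: upt_Suc)
  ultimately show ?thesis by simp
qed

lemma finite_Xlam: "finite (Xlam L)"
proof (rule finite_subset)
  show "Xlam L \<subseteq> {xs. set xs \<subseteq> {1..Suc L} \<and> length xs = Suc L}" using Xlam_props by auto
  show "finite {xs. set xs \<subseteq> {1..Suc L} \<and> length xs = Suc L}" by (rule finite_lists_length_eq) simp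
qed



lemma sq_ge1: fixes d :: int assumes "d \<noteq> 0" shows "1 \<le> d^2"
proof (cases "d > 0")
  case True
  then have "1 \<le> d" by simp
  then have "1 * 1 \<le> d * d" by (intro mult_mono) auto
  then show ?thesis by (simp add: power2_eq_square)
next
  case False
  then have "1 \<le> -d" using assms by simp
  then have "1 * 1 \<le> (-d) * (-d)" by (intro mult_mono) auto
  then show ?thesis by (simp add: power2_eq_square)
qed

lemma consec_ge0: fixes d :: int shows "0 \<le> d * (d - 1)"
proof (cases "d \<ge> 1")
  case True then show ?thesis by simp
next
  case False then have "d \<le> 0" by simp
  then show ?thesis by (simp add: mult_nonpos_nonpos)
qed

lemma exp_le:
  fixes i h :: nat
  assumes "h \<noteq> Suc i"
  shows "2 * (int i + 1) * int h - (int h)^2 + 1 \<le> (int i + 1)^2"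
proof -
  have "int h - (int i + 1) \<noteq> 0" using assms by simp
  then have "1 \<le> (int h - (int i + 1))^2" by (rule sq_ge1)
  then show ?thesis by (simp add: power2_eq_square algebra_simps)
qed

lemma exp_eq:
  fixes i :: nat
  shows "2 * (int i + 1) * int (Suc i) - (int (Suc i))^2 + 1 = (int i + 1)^2 + 1"
  by (simp add: power2_eq_square algebra_simps)

lemma cexp_le:
  fixes i r :: nat
  shows "(2 * int r + 1) * (int i + 1) - (int r)^2 - int r \<le> (int i + 1)^2"
proof -
  have "0 \<le> (int i + 1 - int r) * (int i + 1 - int r - 1)" by (rule consec_ge0)
  then show ?thesis by (simp add: power2_eq_square algebra_simps)
qed

lemma cexp_eq:
  fixes i :: nat
  shows "(2 * int i + 1) * (int i + 1) - (int i)^2 - int i = (int i + 1)^2"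
  by (simp add: power2_eq_square algebra_simps)

lemma gam_ge1: "1 \<le> gam L"
  unfolding gam_def by simp

lemma gam_pos: "0 < gam L" using gam_ge1[of L] by simp

context
  fixes L i :: nat
begin

definition "AA = gam L powi ((int i + 1)^2)"
definition "CC = (\<Sum>r\<in>{0..L}. gam L powi ((2 * int r + 1) * (int i + 1) - (int r)^2 - int r))"

lemma AA_pos: "0 < AA" unfolding AA_def using gam_pos by simp

lemma CC_le: "CC \<le> (real L + 1) * AA"
proof -
  have "CC \<le> (\<Sum>r\<in>{0..L}. AA)"
    unfolding CC_def AA_def by (intro sum_mono power_int_increasing cexp_le gam_ge1)
  then show ?thesis by (simp add: algebra_simps)
qed

lemma CC_ge: "i \<le> L \<Longrightarrow> AA \<le> CC"
proof -
  assume iL: "i \<le> L"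
  have "AA = gam L powi ((2 * int i + 1) * (int i + 1) - (int i)^2 - int i)"
    unfolding AA_def using cexp_eq[of i] by simp
  also have "\<dots> \<le> CC" unfolding CC_def
    by (rule member_le_sum[of i]) (use iL gam_pos[of L] in \<open>auto intro: less_imp_le\<close>)
  finally show ?thesis .
qed

lemma wt_eq: "wt L i h = gam L powi (2 * (int i + 1) * int h - (int h)^2 + 1) + CC"
  unfolding wt_def CC_def by simp

lemma wt_diag: "gam L * AA \<le> wt L i (Suc i)"
proof -
  have "gam L powi (2 * (int i + 1) * int (Suc i) - (int (Suc i))^2 + 1) = gam L powi ((int i + 1)^2 + 1)"
    using exp_eq[of i] by simp
  also have "\<dots> = gam L powi ((int i + 1)^2) * gam L"
  proof -
    have "gam L \<noteq> 0" using gam_pos[of L] by simp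
    then show ?thesis by (simp add: power_int_add)
  qed
  finally have "gam L powi (2 * (int i + 1) * int (Suc i) - (int (Suc i))^2 + 1) = gam L * AA"
    by (simp add: AA_def)
  moreover have "0 \<le> CC" unfolding CC_def using gam_pos[of L] by (intro sum_nonneg less_imp_le zero_less_power_int)
  ultimately show ?thesis using wt_eq[of "Suc i"] by simp
qed

lemma wt_off: "h \<noteq> Suc i \<Longrightarrow> wt L i h \<le> (real L + 2) * AA"
proof -
  assume h: "h \<noteq> Suc i"
  have "gam L powi (2 * (int i + 1) * int h - (int h)^2 + 1) \<le> AA"
    unfolding AA_def by (intro power_int_increasing exp_le h gam_ge1)
  then show ?thesis using wt_eq[of h] CC_le by (simp add: algebra_simps)
qed

lemma wt_ge: "i \<le> L \<Longrightarrow> AA \<le> wt L i h"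
proof -
  assume "i \<le> L"
  then have "AA \<le> CC" by (rule CC_ge)
  moreover have "0 < gam L powi (2 * (int i + 1) * int h - (int h)^2 + 1)" using gam_pos by simp
  ultimately show ?thesis using wt_eq[of h] by simp
qed

lemma wt_pos: "i \<le> L \<Longrightarrow> 0 < wt L i h"
  using wt_ge AA_pos by (meson less_le_trans)

end


lemma wt_diag_eq: "wt L i (Suc i) = gam L * AA L i + CC L i"
proof -
  have "gam L powi (2 * (int i + 1) * int (Suc i) - (int (Suc i))^2 + 1) = gam L powi ((int i + 1)^2 + 1)"
    using exp_eq[of i] by simp
  also have "\<dots> = gam L powi ((int i + 1)^2) * gam L"
  proof -
    have "gam L \<noteq> 0" using gam_pos[of L] by simp
    then show ?thesis by (simp add: power_int_add)
  qed
  finally show ?thesis using wt_eq[of L i "Suc i"] by (simp add: AA_def mult.commute)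
qed

lemma Dsum:
  assumes "i \<le> L"
  shows "(\<Sum>h\<in>{1..L+1}. wt L i h) = wt L i (Suc i) + (\<Sum>h\<in>{1..L+1} - {Suc i}. wt L i h)"
  using assms by (subst sum.remove[of _ "Suc i"]) auto

lemma R_le:
  assumes "i \<le> L"
  shows "(\<Sum>h\<in>{1..L+1} - {Suc i}. wt L i h) \<le> real L * ((real L + 2) * AA L i)"
proof -
  have "(\<Sum>h\<in>{1..L+1} - {Suc i}. wt L i h) \<le> (\<Sum>h\<in>{1..L+1} - {Suc i}. (real L + 2) * AA L i)"
    by (intro sum_mono wt_off) auto
  also have "\<dots> \<le> real L * ((real L + 2) * AA L i)"
  proof -
    have "Suc i \<in> {1..L+1}" using assms by simp
    then have "card ({1..L+1} - {Suc i}) = L" by simp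
    then show ?thesis by simp
  qed
  finally show ?thesis .
qed

lemma poly_ineq1: "real L * real L + 3 * real L + 1 \<le> (real L + 1) ^ 3"
proof -
  have "L * L + 3 * L + 1 \<le> (L + 1) ^ 3" by (simp add: power3_eq_cube algebra_simps)
  then have "real (L * L + 3 * L + 1) \<le> real ((L + 1) ^ 3)" by (simp only: of_nat_le_iff)
  then show ?thesis by (simp add: algebra_simps)
qed

lemma poly_ineq2: "real L * (real L * (real L + 2)) \<le> (real L + 1) ^ 3"
proof -
  have "L * (L * (L + 2)) \<le> (L + 1) ^ 3" by (simp add: power3_eq_cube algebra_simps)
  then have "real (L * (L * (L + 2))) \<le> real ((L + 1) ^ 3)" by (simp only: of_nat_le_iff)
  then show ?thesis by (simp add: algebra_simps)
qed

lemma piA_any: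
  assumes "i \<le> L"
  shows "1 / (2 * gam L) \<le> piA L i h"
proof -
  define A where "A = AA L i"
  define D where "D = (\<Sum>h\<in>{1..L+1}. wt L i h)"
  have A: "0 < A" unfolding A_def by (rule AA_pos)
  have G: "gam L = (real L + 1) ^ 3" by (simp add: gam_def)
  have "D \<le> gam L * A + (real L + 1) * A + real L * ((real L + 2) * A)"
    unfolding D_def A_def using Dsum[OF assms] R_le[OF assms] wt_diag_eq[of L i] CC_le[of L i] by simp
  also have "\<dots> = (gam L + (real L * real L + 3 * real L + 1)) * A" by (simp add: algebra_simps)
  also have "\<dots> \<le> (2 * gam L) * A" using poly_ineq1[of L] A G by (intro mult_right_mono) auto
  finally have D: "D \<le> 2 * gam L * A" by simp
  have Dpos: "0 < D" unfolding D_def using wt_pos[OF assms] by (intro sum_pos) auto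
  have "A / (2 * gam L * A) \<le> wt L i h / D"
    using wt_ge[OF assms, of h] A D Dpos by (intro frac_le) (auto simp: A_def)
  moreover have "A / (2 * gam L * A) = 1 / (2 * gam L)" using A by simp
  ultimately show ?thesis unfolding piA_def D_def by simp
qed

lemma piA_diag:
  assumes "i \<le> L"
  shows "real L / (real L + 1) \<le> piA L i (Suc i)"
proof -
  define A where "A = AA L i"
  define W where "W = wt L i (Suc i)"
  define R where "R = (\<Sum>h\<in>{1..L+1} - {Suc i}. wt L i h)"
  have A: "0 < A" unfolding A_def by (rule AA_pos)
  have G: "gam L = (real L + 1) ^ 3" by (simp add: gam_def)
  have W: "gam L * A \<le> W" unfolding W_def A_def by (rule wt_diag)
  have R: "R \<le> real L * ((real L + 2) * A)" unfolding R_def A_def by (rule R_le[OF assms])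
  have R0: "0 \<le> R" unfolding R_def using wt_pos[OF assms] by (intro sum_nonneg less_imp_le) auto
  have "real L * R \<le> real L * (real L * ((real L + 2) * A))" using R by (intro mult_left_mono) auto
  also have "\<dots> = (real L * (real L * (real L + 2))) * A" by (simp add: algebra_simps)
  also have "\<dots> \<le> gam L * A" using poly_ineq2[of L] A G by (intro mult_right_mono) auto
  finally have LR: "real L * R \<le> W" using W by simp
  have Wpos: "0 < W" using W A gam_pos[of L] by (meson less_le_trans mult_pos_pos)
  have "real L / (real L + 1) \<le> W / (W + R)"
    using LR Wpos R0 by (simp add: divide_simps algebra_simps)
  then show ?thesis unfolding piA_def W_def R_def using Dsum[OF assms] by simp
qed

lemma piA_sum:
  assumes "i \<le> L"
  shows "(\<Sum>h\<in>{1..L+1}. piA L i h) = 1"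
proof -
  have "0 < (\<Sum>h\<in>{1..L+1}. wt L i h)" using wt_pos[OF assms] by (intro sum_pos) auto
  then show ?thesis unfolding piA_def by (simp add: sum_divide_distrib[symmetric])
qed

lemma piA_pos: "i \<le> L \<Longrightarrow> 0 < piA L i h"
  unfolding piA_def using wt_pos[of i L] by (intro divide_pos_pos sum_pos) auto



lemma pibar_nonneg: "0 \<le> pibar L \<xi>"
  unfolding pibar_def using piA_pos by (intro prod_nonneg) (auto intro: less_imp_le)

lemma sum_X_le1: "(\<Sum>\<xi>\<in>Xlam L. pibar L \<xi>) \<le> 1"
proof -
  define I where "I = {0..L}"
  define K where "K = (\<lambda>_::nat. {1..L+1})"
  define \<phi> where "\<phi> \<xi> = restrict (\<lambda>i. \<xi> ! i) I" for \<xi> :: "nat list"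
  define F where "F f = (\<Prod>i\<in>I. piA L i (f i))" for f
  have inj: "inj_on \<phi> (Xlam L)"
  proof (rule inj_onI)
    fix \<xi> \<eta> assume x: "\<xi> \<in> Xlam L" and y: "\<eta> \<in> Xlam L" and e: "\<phi> \<xi> = \<phi> \<eta>"
    have lx: "length \<xi> = Suc L" and ly: "length \<eta> = Suc L" using Xlam_props x y by auto
    show "\<xi> = \<eta>"
    proof (rule nth_equalityI)
      show "length \<xi> = length \<eta>" using lx ly by simp
      fix i assume "i < length \<xi>"
      then have "i \<in> I" using lx by (auto simp: I_def)
      then show "\<xi> ! i = \<eta> ! i" using fun_cong[OF e, of i] by (simp add: \<phi>_def)
    qed
  qed
  have sub: "\<phi> ` Xlam L \<subseteq> PiE I K"
  proof
    fix f assume "f \<in> \<phi> ` Xlam L"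
    then obtain \<xi> where x: "\<xi> \<in> Xlam L" and f: "f = \<phi> \<xi>" by blast
    have p: "length \<xi> = Suc L" "set \<xi> = {1..Suc L}" using Xlam_props[OF x] by auto
    have "\<xi> ! i \<in> {1..L+1}" if "i \<in> I" for i
    proof -
      have "i < length \<xi>" using that p by (auto simp: I_def)
      then have "\<xi> ! i \<in> set \<xi>" by simp
      then show ?thesis using p by simp
    qed
    then show "f \<in> PiE I K" unfolding f \<phi>_def K_def by auto
  qed
  have "(\<Sum>\<xi>\<in>Xlam L. pibar L \<xi>) = (\<Sum>\<xi>\<in>Xlam L. F (\<phi> \<xi>))"
    unfolding pibar_def F_def \<phi>_def I_def by (intro sum.cong prod.cong) auto
  also have "\<dots> = (\<Sum>f\<in>\<phi> ` Xlam L. F f)" using inj by (simp add: sum.reindex)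
  also have "\<dots> \<le> (\<Sum>f\<in>PiE I K. F f)"
  proof (rule sum_mono2)
    show "finite (PiE I K)" unfolding I_def K_def by (intro finite_PiE) auto
    show "\<phi> ` Xlam L \<subseteq> PiE I K" by (rule sub)
    show "0 \<le> F f" for f unfolding F_def I_def using piA_pos by (intro prod_nonneg) (auto intro: less_imp_le)
  qed
  also have "\<dots> = (\<Prod>i\<in>I. \<Sum>h\<in>K i. piA L i h)"
    unfolding F_def by (rule prod_sum_PiE[symmetric]) (auto simp: I_def K_def)
  also have "\<dots> = 1" unfolding I_def K_def using piA_sum by (intro prod.neutral) auto
  finally show ?thesis .
qed

lemma q_pow_gt:
  assumes "L \<ge> 2"
  shows "exp (-1) < (real L / (real L + 1)) ^ (L - 1)"
proof -
  define q where "q = real L / (real L + 1)"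
  have q: "0 < q" using assms by (simp add: q_def)
  have lnq: "ln q = - ln (1 + 1 / real L)"
  proof -
    have "1 + 1 / real L = (real L + 1) / real L" using assms by (simp add: field_simps)
    then have "ln (1 + 1 / real L) = ln (real L + 1) - ln (real L)" using assms by (simp add: ln_div)
    moreover have "ln q = ln (real L) - ln (real L + 1)" using assms by (simp add: q_def ln_div)
    ultimately show ?thesis by simp
  qed
  have "ln (1 + 1 / real L) \<le> 1 / real L" by (rule ln_add_one_self_le_self) simp
  then have "- (1 / real L) \<le> ln q" using lnq by simp
  then have "real (L - 1) * (- (1 / real L)) \<le> real (L - 1) * ln q" by (intro mult_left_mono) auto
  moreover have "-1 < real (L - 1) * (- (1 / real L))"
    using assms by (simp add: of_nat_diff field_simps)
  ultimately have "-1 < real (L - 1) * ln q" by linarith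
  then have "exp (-1) < exp (real (L - 1) * ln q)" by simp
  also have "exp (real (L - 1) * ln q) = q ^ (L - 1)"
    using q by (simp add: exp_of_nat_mult)
  finally show ?thesis by (simp add: q_def)
qed

lemma pibar_tgt:
  assumes "L \<ge> 2"
  shows "1 / (4 * exp 1 * (real L + 1) ^ 6) < pibar L (tgt L)"
proof -
  define G where "G = gam L"
  define c1 where "c1 = 1 / (2 * G)"
  define c2 where "c2 = real L / (real L + 1)"
  define lb where "lb i = (if i = 0 \<or> i = L then c1 else c2)" for i
  have G: "G = (real L + 1) ^ 3" by (simp add: G_def gam_def)
  have Gpos: "0 < G" using gam_pos by (simp add: G_def)
  have c1: "0 < c1" using Gpos by (simp add: c1_def)
  have c2: "0 < c2" using assms by (simp add: c2_def)
  have bnd: "0 \<le> lb i \<and> lb i \<le> piA L i (tgt L ! i)" if "i \<in> {0..L}" for i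
  proof -
    have iL: "i \<le> L" using that by simp
    show ?thesis
    proof (cases "i = 0 \<or> i = L")
      case True
      then show ?thesis using piA_any[OF iL] c1 by (auto simp: lb_def c1_def G_def)
    next
      case False
      then have "tgt L ! i = Suc i" using tgt_nth[of L i] assms iL by simp
      then show ?thesis using piA_diag[OF iL] c2 False by (auto simp: lb_def c2_def)
    qed
  qed
  have "(\<Prod>i\<in>{0..L}. lb i) \<le> pibar L (tgt L)"
    unfolding pibar_def using bnd by (intro prod_mono) auto
  moreover have "(\<Prod>i\<in>{0..L}. lb i) = c1 * c1 * c2 ^ (L - 1)"
  proof -
    have split: "{0..L} = insert 0 (insert L {1..L-1})" using assms by auto
    have "(\<Prod>i\<in>{1..L-1}. lb i) = (\<Prod>i\<in>{1..L-1}. c2)"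
      by (intro prod.cong) (auto simp: lb_def)
    also have "\<dots> = c2 ^ (L - 1)" by simp
    finally have m: "(\<Prod>i\<in>{1..L-1}. lb i) = c2 ^ (L - 1)" .
    have "(\<Prod>i\<in>{0..L}. lb i) = lb 0 * (lb L * (\<Prod>i\<in>{1..L-1}. lb i))"
      unfolding split using assms by (simp add: prod.insert)
    then show ?thesis using m by (simp add: lb_def)
  qed
  moreover have "c1 * c1 * exp (-1) < c1 * c1 * c2 ^ (L - 1)"
    using q_pow_gt[OF assms] c1 by (simp add: c2_def)
  moreover have "c1 * c1 * exp (-1) = 1 / (4 * exp 1 * (real L + 1) ^ 6)"
    unfolding c1_def G by (simp add: exp_minus field_simps power_mult[symmetric])
  ultimately show ?thesis by linarith
qed

theorem lemma14:
  fixes L :: nat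
  assumes "L \<ge> 2"
  shows "pibar_lam L (Xlam L - Sset L) > 1 / (4 * exp 1 * (real L + 1) ^ 6)"
proof -
  let ?X = "Xlam L" and ?S = "Sset L"
  have fin: "finite ?X" by (rule finite_Xlam)
  have tX: "tgt L \<in> ?X" using tgt_in_X assms by simp
  have tS: "tgt L \<notin> ?S" using tgt_not_S[OF assms] .
  have b: "1 / (4 * exp 1 * (real L + 1) ^ 6) < pibar L (tgt L)" by (rule pibar_tgt[OF assms])
  have pos: "0 < 1 / (4 * exp 1 * (real L + 1) ^ 6)" by simp
  have sXS: "pibar L (tgt L) \<le> (\<Sum>\<xi>\<in>?X - ?S. pibar L \<xi>)"
    using tX tS fin pibar_nonneg by (intro member_le_sum) auto
  have sX: "pibar L (tgt L) \<le> (\<Sum>\<xi>\<in>?X. pibar L \<xi>)"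
    using tX fin pibar_nonneg by (intro member_le_sum) auto
  have sX1: "(\<Sum>\<xi>\<in>?X. pibar L \<xi>) \<le> 1" by (rule sum_X_le1)
  define A where "A = (\<Sum>\<xi>\<in>?X - ?S. pibar L \<xi>)"
  define B where "B = (\<Sum>\<xi>\<in>?X. pibar L \<xi>)"
  have Bpos: "0 < B" using sX b pos unfolding B_def by linarith
  have A0: "0 \<le> A" unfolding A_def using pibar_nonneg by (intro sum_nonneg) auto
  have "A \<le> A / B" using Bpos A0 sX1 unfolding B_def[symmetric] by (simp add: le_divide_eq mult_left_le)
  then have "pibar L (tgt L) \<le> A / B" using sXS unfolding A_def by linarith
  then show ?thesis using b unfolding pibar_lam_def A_def B_def by linarith
qed


end
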